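(* For integers $n_1\ge n_2\ge0$, let $$A(n_1,n_2)=\sum_{i=0}^{n_2}\binom{n_2}{i}\,n_1(n_1-1)\cdots(n_1-i+1),$$ where the $i=0$ term is $1$. Then: - if $n_1\ge2$, $A(n_1,n_2)\le\frac{n_1}{n_1-1}\,n_1^{n_2}$; - if $n_2\ge4$, $A(n_1,n_2)\le n_1^{n_2}$. *)

theory Defs
  imports Complex_Main
begin

definition falling :: "nat \<Rightarrow> nat \<Rightarrow> nat" where
  "falling n i = (\<Prod>j<i. n - j)"

definition A :: "nat \<Rightarrow> nat \<Rightarrow> nat" where
  "A n1 n2 = (\<Sum>i = 0..n2. (n2 choose i) * falling n1 i)"

end

theory Submission
  imports Defs
begin

definition ffr :: "real \<Rightarrow> nat \<Rightarrow> real" where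
  "ffr x i = (\<Prod>j<i. x - real j)"

definition SS :: "real \<Rightarrow> nat \<Rightarrow> real" where
  "SS x m = (\<Sum>i\<le>m. real (m choose i) * ffr x i)"

definition TT :: "real \<Rightarrow> nat \<Rightarrow> real" where
  "TT x m = (\<Sum>i\<le>m. real (m choose i) * ffr x (Suc i))"

definition UU :: "real \<Rightarrow> nat \<Rightarrow> real" where
  "UU x m = (\<Sum>i\<le>m. real i * real (m choose i) * ffr x i)"

lemma ffr_Suc: "ffr x (Suc i) = ffr x i * (x - real i)"
  by (simp add: ffr_def)

lemma ffr_0: "ffr x 0 = 1" by (simp add: ffr_def)

lemma falling_real: "real (falling n i) = ffr (real n) i"
proof (cases "i \<le> n")
  case True
  then show ?thesis unfolding falling_def ffr_def
    by (simp add: of_nat_diff)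
next
  case False
  then have "n \<in> {..<i}" by simp
  then have "falling n i = 0" unfolding falling_def
    by (metis diff_self_eq_0 finite_lessThan prod_zero_iff)
  moreover have "ffr (real n) i = 0" unfolding ffr_def
    using \<open>n \<in> {..<i}\<close> by (metis (no_types, lifting) diff_self finite_lessThan prod_zero_iff)
  ultimately show ?thesis by simp
qed

lemma A_real: "real (A n m) = SS (real n) m"
  unfolding A_def SS_def by (simp add: falling_real atLeast0AtMost)

lemma SS_Suc: "SS x (Suc m) = SS x m + TT x m"
proof -
  have "SS x (Suc m) = 1 + (\<Sum>i\<le>m. real (Suc m choose Suc i) * ffr x (Suc i))"
    unfolding SS_def by (subst sum.atMost_Suc_shift) (simp add: ffr_0 del: binomial_Suc_Suc sum.atMost_Suc)
  also have "\<dots> = 1 + (\<Sum>i\<le>m. real (m choose Suc i) * ffr x (Suc i)) + TT x m"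
    unfolding TT_def by (simp add: sum.distrib algebra_simps)
  also have "1 + (\<Sum>i\<le>m. real (m choose Suc i) * ffr x (Suc i)) = SS x m"
  proof -
    have "SS x m = (\<Sum>i\<le>Suc m. real (m choose i) * ffr x i)"
      unfolding SS_def by simp
    also have "\<dots> = 1 + (\<Sum>i\<le>m. real (m choose Suc i) * ffr x (Suc i))"
      by (subst sum.atMost_Suc_shift) (simp add: ffr_0 del: sum.atMost_Suc)
    finally show ?thesis by simp
  qed
  finally show ?thesis .
qed

lemma TT_eq: "TT x m = x * SS x m - UU x m"
  unfolding TT_def SS_def UU_def
  by (simp add: ffr_Suc sum_distrib_left sum_subtractf[symmetric] algebra_simps)

lemma UU_Suc: "UU x (Suc m) = real (Suc m) * TT x m"
proof -
  have "UU x (Suc m) = (\<Sum>i\<le>m. real (Suc i) * real (Suc m choose Suc i) * ffr x (Suc i))"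
    unfolding UU_def by (subst sum.atMost_Suc_shift) (simp del: of_nat_Suc binomial_Suc_Suc sum.atMost_Suc)
  also have "\<dots> = (\<Sum>i\<le>m. real (Suc m) * (real (m choose i) * ffr x (Suc i)))"
  proof (rule sum.cong[OF refl])
    fix i
    have "Suc i * (Suc m choose Suc i) = Suc m * (m choose i)"
      by (rule Suc_times_binomial)
    then have "real (Suc i) * real (Suc m choose Suc i) = real (Suc m) * real (m choose i)"
      by (metis of_nat_mult)
    then show "real (Suc i) * real (Suc m choose Suc i) * ffr x (Suc i) = real (Suc m) * (real (m choose i) * ffr x (Suc i))"
      by simp
  qed
  also have "\<dots> = real (Suc m) * TT x m" unfolding TT_def by (simp add: sum_distrib_left)
  finally show ?thesis .
qed

lemma SS_rec: "SS x (Suc (Suc m)) = (x - real m) * SS x (Suc m) + real (Suc m) * SS x m"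
proof -
  have a: "SS x (Suc (Suc m)) = SS x (Suc m) + x * SS x (Suc m) - real (Suc m) * TT x m"
    using SS_Suc[of x "Suc m"] TT_eq[of x "Suc m"] UU_Suc[of x m] by simp
  have b: "TT x m = SS x (Suc m) - SS x m" using SS_Suc[of x m] by simp
  show ?thesis unfolding a b by (simp add: algebra_simps)
qed

lemma SS_0: "SS x 0 = 1" by (simp add: SS_def ffr_0)
lemma SS_1: "SS x 1 = 1 + x" by (simp add: SS_def ffr_def)
lemma SS_1': "SS x (Suc 0) = 1 + x" by (simp add: SS_def ffr_def)


lemma SS_2: "SS x 2 = x * x + x + 1"
  using SS_rec[of x 0] by (simp add: numeral_2_eq_2 SS_0 SS_1' algebra_simps)
lemma SS_3: "SS x 3 = (x - 1) * SS x 2 + 2 * SS x 1"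
  using SS_rec[of x 1] by (simp add: numeral_3_eq_3 numeral_2_eq_2)
lemma SS_4: "SS x 4 = (x - 2) * SS x 3 + 3 * SS x 2"
  using SS_rec[of x 2] by (simp add: numeral_3_eq_3 numeral_2_eq_2 eval_nat_numeral)
lemma SS_5: "SS x 5 = (x - 3) * SS x 4 + 4 * SS x 3"
  using SS_rec[of x 3] by (simp add: eval_nat_numeral)

lemma SS_4': "SS x 4 = x^4 - 2*x^3 + 5*x^2 + 1"
  unfolding SS_4 SS_3 SS_2 SS_1 by (simp add: algebra_simps power2_eq_square power3_eq_cube power4_eq_xxxx)

lemma SS_5': "SS x 5 = x^5 - 5*x^4 + 15*x^3 - 15*x^2 + 9*x + 1"
  unfolding SS_5 SS_4' SS_3 SS_2 SS_1 by (simp add: algebra_simps eval_nat_numeral)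

lemma step_ineq:
  fixes x c a b :: real and k :: nat
  assumes "c \<ge> 0" "x \<ge> 2" "k \<ge> 1" "real k \<le> x"
    "a \<le> c * x^(Suc k)" "b \<le> c * x^k"
  shows "(x - real k) * a + real (Suc k) * b \<le> c * x^(Suc (Suc k))"
proof -
  have "(x - real k) * a \<le> (x - real k) * (c * x^(Suc k))"
    using assms by (intro mult_left_mono) auto
  moreover have "real (Suc k) * b \<le> real (Suc k) * (c * x^k)"
    using assms by (intro mult_left_mono) auto
  moreover have "(x - real k) * (c * x^(Suc k)) + real (Suc k) * (c * x^k)
      = c * x^k * ((x - real k) * x + real k + 1)"
    by (simp add: algebra_simps)
  moreover have "(x - real k) * x + real k + 1 \<le> x * x"
  proof -
    have "real k * (x - 1) \<ge> 1 * 1" using assms by (intro mult_mono) auto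
    then show ?thesis by (simp add: algebra_simps)
  qed
  moreover have "c * x^k \<ge> 0" using assms by simp
  ultimately have "(x - real k) * a + real (Suc k) * b \<le> c * x^k * (x * x)"
    by (smt (verit) mult_left_mono)
  then show ?thesis by (simp add: algebra_simps)
qed

lemma bound1:
  fixes x :: real
  assumes x: "x \<ge> 2"
  shows "real m \<le> x \<Longrightarrow> SS x m \<le> x / (x - 1) * x^m"
proof (induction m rule: less_induct)
  case (less m)
  define c where "c = x / (x - 1)"
  have c0: "c \<ge> 0" using x unfolding c_def by simp
  have c1: "(x - 1) * c = x" using x unfolding c_def by simp
  consider "m = 0" | "m = 1" | "m = 2" | k where "m = Suc (Suc k)" "k \<ge> 1"
  proof -
    have "m = 0 \<or> m = 1 \<or> m = 2 \<or> (\<exists>k. m = Suc (Suc k) \<and> k \<ge> 1)"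
      by (cases m; cases "m - 1"; auto)
    then show "\<And>P. (m = 0 \<Longrightarrow> P) \<Longrightarrow> (m = 1 \<Longrightarrow> P) \<Longrightarrow> (m = 2 \<Longrightarrow> P) \<Longrightarrow> (\<And>k. m = Suc (Suc k) \<Longrightarrow> 1 \<le> k \<Longrightarrow> P) \<Longrightarrow> P" by blast
  qed
  then show ?case
  proof cases
    case 1
    have "1 \<le> c" using c1 x by (smt (verit) mult_le_cancel_right1 mult.commute)
    then show ?thesis using 1 by (simp add: SS_0 c_def)
  next
    case 2
    have "(x - 1) * (1 + x) \<le> (x - 1) * (c * x)" using c1 by (simp add: algebra_simps power2_eq_square)
    then have "1 + x \<le> c * x" using x by simp
    then show ?thesis using 2 by (simp add: SS_1 SS_1' c_def)
  next
    case 3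
    have e1: "(x - 1) * (c * x^2) = ((x - 1) * c) * x^2" by (simp add: algebra_simps)
    have e2: "(x - 1) * (x*x+x+1) = x * x^2 - 1" by (simp add: algebra_simps power2_eq_square)
    have "(x - 1) * (x*x+x+1) \<le> (x - 1) * (c * x^2)" unfolding e1 e2 c1 by simp
    then have "x*x+x+1 \<le> c * x^2" using x by simp
    then show ?thesis using 3 by (simp add: SS_2 c_def)
  next
    case 4
    have ih1: "SS x (Suc k) \<le> c * x^(Suc k)" using less.IH[of "Suc k"] less.prems 4 unfolding c_def by simp
    have ih2: "SS x k \<le> c * x^k" using less.IH[of k] less.prems 4 unfolding c_def by simp
    have "SS x m = (x - real k) * SS x (Suc k) + real (Suc k) * SS x k"
      using 4 SS_rec by simp
    also have "\<dots> \<le> c * x^m"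
      using step_ineq[OF c0 x \<open>k \<ge> 1\<close> _ ih1 ih2] less.prems 4 by simp
    finally show ?thesis unfolding c_def .
  qed
qed

lemma bound2:
  fixes x :: real
  assumes x: "real m \<le> x" and m: "m \<ge> 4"
  shows "SS x m \<le> x^m"
  using assms
proof (induction m rule: less_induct)
  case (less m)
  then have x4: "x \<ge> 4" by simp
  consider "m = 4" | "m = 5" | k where "m = Suc (Suc k)" "k \<ge> 4"
  proof -
    have "m = 4 \<or> m = 5 \<or> (\<exists>k. m = Suc (Suc k) \<and> k \<ge> 4)"
      using less.prems(2) by (cases "m \<le> 5") (auto intro!: exI[of _ "m - 2"])
    then show "\<And>P. (m = 4 \<Longrightarrow> P) \<Longrightarrow> (m = 5 \<Longrightarrow> P) \<Longrightarrow> (\<And>k. m = Suc (Suc k) \<Longrightarrow> 4 \<le> k \<Longrightarrow> P) \<Longrightarrow> P" by blast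
  qed
  then show ?case
  proof cases
    case 1
    have "x^2 * (2*x - 5) \<ge> 16 * 3" using x4
      by (intro mult_mono) (auto simp: power2_eq_square intro: mult_mono[of 4 x 4 x, simplified])
    then have "2*x^3 - 5*x^2 - 1 \<ge> 0" by (simp add: algebra_simps power2_eq_square power3_eq_cube)
    then show ?thesis using 1 by (simp add: SS_4')
  next
    case 2
    then have x5: "x \<ge> 5" using less.prems by simp
    have "x^3 * (x - 3) \<ge> 0" using x5 by simp
    moreover have "x * (15 * x - 9) \<ge> 5 * 66" using x5 by (intro mult_mono) auto
    ultimately have "5*x^4 - 15*x^3 + 15*x^2 - 9*x - 1 \<ge> 0"
      by (simp add: algebra_simps power2_eq_square power3_eq_cube power4_eq_xxxx)
    then show ?thesis using 2 by (simp add: SS_5')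
  next
    case 3
    have ih1: "SS x (Suc k) \<le> 1 * x^(Suc k)" using less.IH[of "Suc k"] less.prems 3 by simp
    have ih2: "SS x k \<le> 1 * x^k" using less.IH[of k] less.prems 3 by simp
    have "SS x m = (x - real k) * SS x (Suc k) + real (Suc k) * SS x k"
      using 3 SS_rec by simp
    also have "\<dots> \<le> 1 * x^m"
      using step_ineq[OF _ _ _ _ ih1 ih2] less.prems 3 x4 by simp
    finally show ?thesis by simp
  qed
qed

theorem mainTheorem4:
  fixes n1 n2 :: nat
  assumes "n1 \<ge> n2"
  shows "(n1 \<ge> 2 \<longrightarrow> real (A n1 n2) \<le> real n1 / (real n1 - 1) * real n1 ^ n2)
       \<and> (n2 \<ge> 4 \<longrightarrow> A n1 n2 \<le> n1 ^ n2)"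
proof (intro conjI impI)
  assume "n1 \<ge> 2"
  then show "real (A n1 n2) \<le> real n1 / (real n1 - 1) * real n1 ^ n2"
    using bound1[of "real n1" n2] assms by (simp add: A_real)
next
  assume "n2 \<ge> 4"
  then have "real (A n1 n2) \<le> real n1 ^ n2"
    using bound2[of n2 "real n1"] assms by (simp add: A_real)
  then show "A n1 n2 \<le> n1 ^ n2"
    by (metis of_nat_le_iff of_nat_power)
qed

end
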